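(* Let $M\subset\mathbb{R}^2$ be a smooth regular closed curve, and let $a,b\in M$ be a standard pair of points. Assume $\kappa_M(a)+\kappa_M(b)\neq 0$ and that $$q=\frac{\kappa_M(a)\, a+\kappa_M(b)\, b}{\kappa_M(a)+\kappa_M(b)}$$ is a regular point of $\mathrm{CSS}(M)$. Then the curvature of $\mathrm{CSS}(M)$ at $q$ equals $$\kappa_{\mathrm{CSS}(M)}(q)=\operatorname{sgn}(\kappa_M(b))\cdot\frac{\big(\kappa_M(a)+\kappa_M(b)\big)^3}{\left|\kappa_M^2(b)\kappa_M'(a)-\kappa_M^2(a)\kappa_M'(b)\right|}\cdot\frac{\det\big(a-b,\mathbbm{t}(a)\big)}{|a-b|^3},$$ where $\mathbbm{t}(a)$ is the unit tangent vector to $M$ at $a$ compatible with the orientation of $M$, and $'$ denotes the derivative with respect to arc length.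
   Context: Two distinct points $a,b\in M$ form a parallel pair if the tangent lines to $M$ at $a$ and $b$ are parallel; the line through $a$ and $b$ is then called an affine chord. The Centre Symmetry Set $\mathrm{CSS}(M)$ is the envelope of all affine chords of $M$. For a regular parameterization $f$ of $M$, $M$ is parameterized at opposite directions at $f(s_1),f(s_2)$ if $f'(s_1)=\alpha f'(s_2)$ with $\alpha<0$. A pair $a,b\in M$ is standard if it is a parallel pair, $M$ is parameterized at opposite directions at $a$ and $b$, and $\kappa_M(b)\neq 0$, where $\kappa_M$ is the signed curvature. For a standard pair, let $f(s)$, $g(t)$ be local arc-length parameterizations of $M$ near $a$ and $b$; there is a smooth function $t(s)$ with $f'(s)=-g'(t(s))$ (and $t'(s)=\kappa_f(s)/\kappa_g(t(s))$). Away from double tangents, $\mathrm{CSS}(M)$ is locally parameterized (natural parameterization) by $\gamma(s)=\dfrac{\kappa_f(s)f(s)+\kappa_g(t(s))g(t(s))}{\kappa_f(s)+\kappa_g(t(s))}$ wherever the denominator is nonzero; regular/singular points and curvature of $\mathrm{CSS}(M)$ refer to this parameterization. *)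

theory Defs
  imports "HOL-Analysis.Analysis"
begin

definition smooth_on :: "real set \<Rightarrow> (real \<Rightarrow> 'a::real_normed_vector) \<Rightarrow> bool" where
  "smooth_on S f \<longleftrightarrow>
     (\<exists>D. D 0 = f \<and> (\<forall>n. \<forall>s\<in>S. (D n has_vector_derivative D (Suc n) s) (at s)))"

definition vel :: "(real \<Rightarrow> real^2) \<Rightarrow> real \<Rightarrow> real^2" where
  "vel p s = vector_derivative p (at s)"

definition acc :: "(real \<Rightarrow> real^2) \<Rightarrow> real \<Rightarrow> real^2" where
  "acc p s = vector_derivative (vel p) (at s)"

definition det2 :: "real^2 \<Rightarrow> real^2 \<Rightarrow> real" where
  "det2 u v = u$1 * v$2 - u$2 * v$1"

definition signed_curvature :: "(real \<Rightarrow> real^2) \<Rightarrow> real \<Rightarrow> real" where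
  "signed_curvature p s = det2 (vel p s) (acc p s) / norm (vel p s) ^ 3"

text \<open>Smooth regular closed curve given by a unit-speed (arc-length), L-periodic
  parameterization c; M = range c, oriented by c.\<close>
definition arclength_closed_curve :: "(real \<Rightarrow> real^2) \<Rightarrow> real \<Rightarrow> bool" where
  "arclength_closed_curve c L \<longleftrightarrow>
     L > 0 \<and> smooth_on UNIV c \<and> (\<forall>s. c (s + L) = c s) \<and> (\<forall>s. norm (vel c s) = 1)"

text \<open>Natural parameterization of CSS(M) near a standard pair, given the
  correspondence function tau (the paper's t(s)).\<close>
definition css_param :: "(real \<Rightarrow> real^2) \<Rightarrow> (real \<Rightarrow> real) \<Rightarrow> real \<Rightarrow> real^2" where
  "css_param c \<tau> s =
     (1 / (signed_curvature c s + signed_curvature c (\<tau> s))) *\<^sub>R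
       (signed_curvature c s *\<^sub>R c s + signed_curvature c (\<tau> s) *\<^sub>R c (\<tau> s))"

end

theory Submission imports Defs begin

lemma final_aux: fixes k1 k2 x lam :: real assumes k2: "k2 \<noteq> 0" and x: "x = k1/k2" and l0: "lam \<noteq> 0"
  shows "(1+x)/\<bar>lam\<bar> = sgn k2 * ((k1+k2)/(\<bar>lam\<bar>*\<bar>k2\<bar>))"
proof (cases "k2 > 0")
  case True thus ?thesis using l0 by (simp add: x field_simps)
next
  case False hence "k2 < 0" using k2 by simp
  thus ?thesis using l0 by (simp add: x field_simps)
qed

lemma final_alg:
  fixes k1 k2 a b x P n lam :: real
  assumes k1: "k1 = x * k2" and s: "k1 + k2 \<noteq> 0" and k2: "k2 \<noteq> 0"
    and lam: "lam = (a * (k1 + k2) - k1 * (a + b * x)) / (k1 + k2)^2"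
    and l0: "lam \<noteq> 0" and n: "n > 0"
  shows "lam * (lam * (1 + x)) * P / (\<bar>lam\<bar> * n)^3
     = sgn k2 * ((k1 + k2)^3 / \<bar>k2^2 * a - k1^2 * b\<bar>) * (P / n^3)"
proof -
  have x: "x = k1 / k2" using k1 k2 by simp
  have A: "k2^2 * a - k1^2 * b = lam * k2 * (k1+k2)^2"
  proof -
    have "lam * (k1+k2)^2 = a * (k1 + k2) - k1 * (a + b * x)" using lam s by simp
    hence "lam * k2 * (k1+k2)^2 = (a * (k1 + k2) - k1 * (a + b * x)) * k2" by simp
    also have "\<dots> = k2^2 * a - k1^2 * b" unfolding x using k2 by (simp add: field_simps power2_eq_square)
    finally show ?thesis by simp
  qed
  have e1: "lam * (lam * (1 + x)) * P = lam^2 * ((1+x) * P)" by (simp add: power2_eq_square)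
  have e2: "(\<bar>lam\<bar> * n)^3 = lam^2 * (\<bar>lam\<bar> * n^3)" by (simp add: power3_eq_cube power2_eq_square)
  have "lam * (lam * (1 + x)) * P / (\<bar>lam\<bar> * n)^3 = lam^2 * ((1+x) * P) / (lam^2 * (\<bar>lam\<bar> * n^3))"
    by (simp only: e1 e2)
  also have "\<dots> = (1+x) * P / (\<bar>lam\<bar> * n^3)"
    by (rule nonzero_mult_divide_mult_cancel_left) (use l0 in simp)
  also have "\<dots> = ((1+x) / \<bar>lam\<bar>) * (P / n^3)" by simp
  also have "(1+x) / \<bar>lam\<bar> = sgn k2 * ((k1+k2)/(\<bar>lam\<bar>*\<bar>k2\<bar>))"
    by (rule final_aux[OF k2 x l0])
  also have "(k1+k2)/(\<bar>lam\<bar>*\<bar>k2\<bar>) = (k1 + k2)^3 / \<bar>k2^2 * a - k1^2 * b\<bar>"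
  proof -
    have "\<bar>k2^2 * a - k1^2 * b\<bar> = (\<bar>lam\<bar> * \<bar>k2\<bar>) * (k1+k2)^2" unfolding A by (simp add: abs_mult)
    thus ?thesis using s by (simp add: power3_eq_cube power2_eq_square)
  qed
  finally show ?thesis .
qed

lemma comp_deriv:
  assumes "(f has_vector_derivative f') F"
  shows "((\<lambda>x. f x $ i) has_real_derivative f' $ i) F"
  using bounded_linear.has_vector_derivative[OF bounded_linear_vec_nth assms, of i]
  by (simp add: has_real_derivative_iff_has_vector_derivative)

lemma det2_deriv:
  assumes "(u has_vector_derivative u') (at x)" "(v has_vector_derivative v') (at x)"
  shows "((\<lambda>s. det2 (u s) (v s)) has_real_derivative det2 u' (v x) + det2 (u x) v') (at x)"
  unfolding det2_def
  apply (rule derivative_eq_intros comp_deriv assms refl)+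
  by (simp add: algebra_simps)

lemma det2_scale: "det2 (a *\<^sub>R u) (b *\<^sub>R u + c *\<^sub>R w) = a * c * det2 u w"
  by (simp add: det2_def algebra_simps)
lemma det2_neg: "det2 (-u) (-w) = det2 u w" "det2 u (a *\<^sub>R w) = a * det2 u w"
  by (simp_all add: det2_def algebra_simps)

theorem proposition2p11:
  fixes c :: "real \<Rightarrow> real^2" and L s0 t0 :: real and \<tau> :: "real \<Rightarrow> real" and e :: real
  assumes curve: "arclength_closed_curve c L"
    and distinct: "c s0 \<noteq> c t0"
    and opposite: "\<exists>\<alpha><0. vel c s0 = \<alpha> *\<^sub>R vel c t0"
    and kb: "signed_curvature c t0 \<noteq> 0"
    and ksum: "signed_curvature c s0 + signed_curvature c t0 \<noteq> 0"
    and e: "e > 0"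
    and tau_smooth: "smooth_on (ball s0 e) \<tau>"
    and tau_s0: "\<tau> s0 = t0"
    and tau_corr: "\<forall>s\<in>ball s0 e. vel c s = - vel c (\<tau> s)"
    and regular: "vel (css_param c \<tau>) s0 \<noteq> 0"
  shows "signed_curvature (css_param c \<tau>) s0 =
     sgn (signed_curvature c t0) *
     ((signed_curvature c s0 + signed_curvature c t0) ^ 3 /
       \<bar>(signed_curvature c t0)\<^sup>2 * deriv (signed_curvature c) s0
        - (signed_curvature c s0)\<^sup>2 * deriv (signed_curvature c) t0\<bar>) *
     (det2 (c s0 - c t0) (vel c s0) / norm (c s0 - c t0) ^ 3)"
proof -
  from curve have L: "smooth_on UNIV c" and unit: "\<And>s. norm (vel c s) = 1"
    unfolding arclength_closed_curve_def by auto
  from L obtain D where D0: "D 0 = c" and Dd: "\<And>n s. (D n has_vector_derivative D (Suc n) s) (at s)"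
    unfolding smooth_on_def by blast
  from tau_smooth obtain E where E0: "E 0 = \<tau>"
    and Ed: "\<And>n s. s \<in> ball s0 e \<Longrightarrow> (E n has_vector_derivative E (Suc n) s) (at s)"
    unfolding smooth_on_def by blast
  have Er: "(E n has_real_derivative E (Suc n) s) (at s)" if "s \<in> ball s0 e" for n s
    using Ed[OF that] by (simp add: has_real_derivative_iff_has_vector_derivative)
  have taud: "(\<tau> has_real_derivative E 1 s) (at s)" if "s \<in> ball s0 e" for s
    using Er[OF that, of 0] E0 by simp
  have cd: "(c has_vector_derivative D 1 s) (at s)" for s using Dd[of 0] D0 by simp
  have velc: "vel c = D 1" by (rule ext) (unfold vel_def, rule vector_derivative_at[OF cd])
  have n2: "Suc 1 = (2::nat)" "Suc 2 = (3::nat)" "Suc 3 = (4::nat)" by simp_all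
  have Dd1: "(D 1 has_vector_derivative D 2 s) (at s)" for s using Dd[of 1] unfolding n2 .
  have Dd2: "(D 2 has_vector_derivative D 3 s) (at s)" for s using Dd[of 2] unfolding n2 .
  have Dd3: "(D 3 has_vector_derivative D 4 s) (at s)" for s using Dd[of 3] unfolding n2 .
  have accc: "acc c = D 2"
    by (rule ext) (unfold acc_def velc, rule vector_derivative_at[OF Dd1])
  define K where "K s = det2 (D 1 s) (D 2 s)" for s
  define K' where "K' s = det2 (D 2 s) (D 2 s) + det2 (D 1 s) (D 3 s)" for s
  define K'' where "K'' s = det2 (D 3 s) (D 2 s) + det2 (D 2 s) (D 3 s) + (det2 (D 2 s) (D 3 s) + det2 (D 1 s) (D 4 s))" for s
  have unitD: "norm (D (Suc 0) s) = 1" for s using unit[of s] velc by simp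
  have sc: "signed_curvature c = K"
    by (rule ext) (simp add: signed_curvature_def K_def velc accc unitD)
  have Kd: "(K has_real_derivative K' s) (at s)" for s
    unfolding K_def K'_def using det2_deriv[OF Dd1 Dd2] by simp
  have K'd: "(K' has_real_derivative K'' s) (at s)" for s
    unfolding K'_def K''_def
    by (intro derivative_intros det2_deriv Dd1 Dd2 Dd3)
  have dK: "deriv K = K'"
    by (rule ext) (simp add: DERIV_imp_deriv Kd)
  have s0b: "s0 \<in> ball s0 e" using e by simp
  have corr: "D 1 s = - D 1 (\<tau> s)" if "s \<in> ball s0 e" for s
    using tau_corr that velc by simp
  have corr2: "D 2 s = - (E 1 s *\<^sub>R D 2 (\<tau> s))" if s: "s \<in> ball s0 e" for s
  proof -
    have "((\<lambda>x. - D 1 (\<tau> x)) has_vector_derivative - (E 1 s *\<^sub>R D 2 (\<tau> s))) (at s)"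
      using vector_diff_chain_at[OF taud[OF s, unfolded has_real_derivative_iff_has_vector_derivative] Dd1]
      by (intro derivative_intros) (simp add: o_def)
    hence "(D 1 has_vector_derivative - (E 1 s *\<^sub>R D 2 (\<tau> s))) (at s)"
      by (rule has_vector_derivative_transform_within_open[OF _ open_ball s]) (metis corr)
    thus ?thesis using Dd1 vector_derivative_unique_at by blast
  qed
  have Kcorr: "K s = E 1 s * K (\<tau> s)" if s: "s \<in> ball s0 e" for s
    unfolding K_def using corr[OF s] corr2[OF s] by (simp add: det2_neg)
  define \<sigma> where "\<sigma> s = K s + K (\<tau> s)" for s
  have Kc: "isCont K s" for s using Kd DERIV_isCont by blast
  have tauc: "isCont \<tau> s0" using taud[OF s0b] DERIV_isCont by blast
  have "continuous (at s0) \<sigma>" unfolding \<sigma>_def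
    by (intro continuous_intros Kc continuous_at_compose[OF tauc, unfolded o_def] ) 
  from continuous_at_avoid[OF this, of 0] ksum tau_s0 sc obtain e' where e': "e' > 0"
    and ne: "\<And>y. dist s0 y < e' \<Longrightarrow> \<sigma> y \<noteq> 0" unfolding \<sigma>_def by auto
  define \<delta> where "\<delta> = min e e'"
  have \<delta>: "\<delta> > 0" using e e' by (simp add: \<delta>_def)
  have sub: "ball s0 \<delta> \<subseteq> ball s0 e" by (rule subset_ball) (simp add: \<delta>_def)
  have sne: "\<sigma> s \<noteq> 0" if "s \<in> ball s0 \<delta>" for s using ne that by (auto simp add: \<delta>_def)
  define lam where "lam s = (K' s * \<sigma> s - K s * (K' s + K' (\<tau> s) * E 1 s)) / (\<sigma> s)^2" for s
  define d where "d s = c s - c (\<tau> s)" for s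
  define G where "G s = c (\<tau> s) + (K s / \<sigma> s) *\<^sub>R d s" for s
  have cssG: "css_param c \<tau> s = G s" if s: "s \<in> ball s0 \<delta>" for s
  proof -
    have "\<sigma> s \<noteq> 0" using sne s .
    have "K s *\<^sub>R c s + K (\<tau> s) *\<^sub>R c (\<tau> s) = \<sigma> s *\<^sub>R c (\<tau> s) + K s *\<^sub>R d s"
      by (simp add: \<sigma>_def d_def algebra_simps)
    hence "css_param c \<tau> s = (1 / \<sigma> s) *\<^sub>R (\<sigma> s *\<^sub>R c (\<tau> s) + K s *\<^sub>R d s)"
      unfolding css_param_def sc \<sigma>_def by simp
    also have "\<dots> = G s" unfolding G_def using \<open>\<sigma> s \<noteq> 0\<close>
      by (simp add: scaleR_add_right)
    finally show ?thesis .
  qed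
  have cdt: "((\<lambda>x. c (\<tau> x)) has_vector_derivative E 1 s *\<^sub>R D 1 (\<tau> s)) (at s)" if s: "s \<in> ball s0 e" for s
    using vector_diff_chain_at[OF taud[OF s, unfolded has_real_derivative_iff_has_vector_derivative] cd]
    by (simp add: o_def)
  have dd: "(d has_vector_derivative D 1 s - E 1 s *\<^sub>R D 1 (\<tau> s)) (at s)" if s: "s \<in> ball s0 e" for s
    unfolding d_def by (intro derivative_intros cd cdt s)
  have Ktd: "((\<lambda>x. K (\<tau> x)) has_real_derivative K' (\<tau> s) * E 1 s) (at s)" if s: "s \<in> ball s0 e" for s
    using DERIV_chain2[OF Kd taud[OF s]] .
  have hd: "((\<lambda>x. K x / \<sigma> x) has_real_derivative lam s) (at s)" if s: "s \<in> ball s0 \<delta>" for s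
  proof -
    have se: "s \<in> ball s0 e" using s sub by blast
    have "(\<sigma> has_real_derivative K' s + K' (\<tau> s) * E 1 s) (at s)"
      unfolding \<sigma>_def by (intro derivative_intros Kd Ktd se)
    from DERIV_divide[OF Kd this sne[OF s]] show ?thesis
      by (simp add: lam_def power2_eq_square)
  qed
  have Gd: "(G has_vector_derivative lam s *\<^sub>R d s) (at s)" if s: "s \<in> ball s0 \<delta>" for s
  proof -
    have se: "s \<in> ball s0 e" using s sub by blast
    have A: "(G has_vector_derivative E 1 s *\<^sub>R D 1 (\<tau> s) + ((K s / \<sigma> s) *\<^sub>R (D 1 s - E 1 s *\<^sub>R D 1 (\<tau> s)) + lam s *\<^sub>R d s)) (at s)"
      unfolding G_def by (intro derivative_intros cdt se hd s dd)
    have B: "E 1 s *\<^sub>R D 1 (\<tau> s) + ((K s / \<sigma> s) *\<^sub>R (D 1 s - E 1 s *\<^sub>R D 1 (\<tau> s)) + lam s *\<^sub>R d s) = lam s *\<^sub>R d s"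
    proof -
      have h: "K s / \<sigma> s * (1 + E 1 s) = E 1 s"
        using sne[OF s] Kcorr[OF se] by (simp add: \<sigma>_def field_simps)
      have "E 1 s *\<^sub>R D 1 (\<tau> s) + (K s / \<sigma> s) *\<^sub>R (D 1 s - E 1 s *\<^sub>R D 1 (\<tau> s))
          = (K s / \<sigma> s * (1 + E 1 s) - E 1 s) *\<^sub>R D 1 s"
        using corr[OF se] by (simp add: algebra_simps)
      also have "\<dots> = 0" using h by simp
      finally show ?thesis by (simp add: add.assoc[symmetric])
    qed
    show ?thesis using A unfolding B .
  qed
  have velG: "vel (css_param c \<tau>) s = lam s *\<^sub>R d s" if s: "s \<in> ball s0 \<delta>" for s
  proof -
    have "(css_param c \<tau> has_vector_derivative lam s *\<^sub>R d s) (at s)"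
      by (rule has_vector_derivative_transform_within_open[OF Gd[OF s] open_ball s]) (simp add: cssG)
    thus ?thesis by (simp add: vel_def vector_derivative_at)
  qed
  have s0d: "s0 \<in> ball s0 \<delta>" using \<delta> by simp
  have K't: "((\<lambda>x. K' (\<tau> x)) has_real_derivative K'' (\<tau> s0) * E 1 s0) (at s0)"
    using DERIV_chain2[OF K'd taud[OF s0b]] .
  have "\<exists>Lm. (lam has_real_derivative Lm) (at s0)"
  proof -
    have sd: "(\<sigma> has_real_derivative K' s0 + K' (\<tau> s0) * E 1 s0) (at s0)"
      unfolding \<sigma>_def by (intro derivative_intros Kd Ktd s0b)
    have E1: "(E 1 has_real_derivative E 2 s0) (at s0)" using Er[OF s0b, of 1] unfolding n2 .
    note q = DERIV_mult[OF K't E1]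
    note r = DERIV_add[OF K'd q]
    note num = DERIV_diff[OF DERIV_mult[OF K'd sd] DERIV_mult[OF Kd r]]
    have lam': "lam = (\<lambda>z. (K' z * \<sigma> z - K z * (K' z + K' (\<tau> z) * E 1 z)) / (\<sigma> z * \<sigma> z))"
      by (rule ext) (simp add: lam_def power2_eq_square)
    have "\<sigma> s0 * \<sigma> s0 \<noteq> 0" using sne[OF s0d] by simp
    from DERIV_divide[OF num DERIV_mult[OF sd sd] this] show ?thesis unfolding lam' by blast
  qed
  then obtain Lm where Lm: "(lam has_real_derivative Lm) (at s0)" by blast
  have accG: "acc (css_param c \<tau>) s0 = Lm *\<^sub>R d s0 + lam s0 *\<^sub>R (D 1 s0 - E 1 s0 *\<^sub>R D 1 (\<tau> s0))"
  proof -
    have "((\<lambda>s. lam s *\<^sub>R d s) has_vector_derivative lam s0 *\<^sub>R (D 1 s0 - E 1 s0 *\<^sub>R D 1 (\<tau> s0)) + Lm *\<^sub>R d s0) (at s0)"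
      by (intro derivative_intros Lm dd s0b)
    hence "(vel (css_param c \<tau>) has_vector_derivative lam s0 *\<^sub>R (D 1 s0 - E 1 s0 *\<^sub>R D 1 (\<tau> s0)) + Lm *\<^sub>R d s0) (at s0)"
      by (rule has_vector_derivative_transform_within_open[OF _ open_ball s0d]) (simp add: velG)
    thus ?thesis by (simp add: acc_def vector_derivative_at add.commute)
  qed
  have accG': "acc (css_param c \<tau>) s0 = Lm *\<^sub>R d s0 + (lam s0 * (1 + E 1 s0)) *\<^sub>R D 1 s0"
    unfolding accG using corr[OF s0b] by (simp add: algebra_simps)
  have l0: "lam s0 \<noteq> 0" using regular velG[OF s0d] by auto
  have dn: "norm (d s0) > 0" using distinct tau_s0 by (simp add: d_def)
  have "signed_curvature (css_param c \<tau>) s0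
      = lam s0 * (lam s0 * (1 + E 1 s0)) * det2 (d s0) (D 1 s0) / (\<bar>lam s0\<bar> * norm (d s0))^3"
    unfolding signed_curvature_def velG[OF s0d] accG' det2_scale by simp
  also have "\<dots> = sgn (K t0) * ((K s0 + K t0)^3 / \<bar>(K t0)^2 * K' s0 - (K s0)^2 * K' t0\<bar>) * (det2 (d s0) (D 1 s0) / norm (d s0)^3)"
    by (rule final_alg[where ?k1.0 = "K s0" and ?k2.0 = "K t0" and a = "K' s0" and b = "K' t0" and x = "E 1 s0"])
       (use Kcorr[OF s0b, unfolded tau_s0] ksum[unfolded sc] kb[unfolded sc] l0 dn in \<open>simp_all add: lam_def \<sigma>_def tau_s0\<close>)
  finally show ?thesis unfolding dK sc velc d_def tau_s0 .
qed

end
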